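(* Let $G\le\mathrm{Aff}(n)$ be a subgroup acting transitively on $\mathbb{R}^n$. Then the centraliser of $G$ in $\mathrm{Aff}(n)$ is a connected unipotent group of dimension at most $n$.
   Context: $\mathrm{Aff}(n)$ is the affine group of $\mathbb{R}^n$, identified with matrices $\begin{pmatrix} g&t\\0&1\end{pmatrix}\in GL(n+1,\mathbb{R})$; a subgroup is unipotent if all its elements are unipotent matrices. *)

theory Defs
  imports "HOL-Analysis.Analysis"
begin

text \<open>Matrices over the index type 'm (in the application 'm = 'n option, i.e. n+1 indices,
  where the extra index None is the homogeneous coordinate). Note that the operator
  times on real^'m^'m is componentwise, so matrix powers and the matrix exponential
  are defined explicitly via the matrix product.\<close>

definition matpow :: "real^'m^'m \<Rightarrow> nat \<Rightarrow> real^'m^'m" where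
  "matpow A k = ((\<lambda>X. A ** X) ^^ k) (mat 1)"

definition mexp :: "real^'m^'m \<Rightarrow> real^'m^'m" where
  "mexp A = (\<Sum>k. (1 / fact k) *\<^sub>R matpow A k)"

definition unipotent_mat :: "real^'m^'m \<Rightarrow> bool" where
  "unipotent_mat A \<longleftrightarrow> (\<exists>N. matpow (A - mat 1) N = 0)"

definition unipotent_group :: "(real^'m^'m) set \<Rightarrow> bool" where
  "unipotent_group H \<longleftrightarrow> (\<forall>A\<in>H. unipotent_mat A)"

definition matrix_subgroup :: "(real^'m^'m) set \<Rightarrow> bool" where
  "matrix_subgroup H \<longleftrightarrow> (\<forall>A\<in>H. invertible A) \<and> mat 1 \<in> H \<and>
     (\<forall>A\<in>H. \<forall>B\<in>H. A ** B \<in> H) \<and> (\<forall>A\<in>H. matrix_inv A \<in> H)"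

definition lie_algebra :: "(real^'m^'m) set \<Rightarrow> (real^'m^'m) set" where
  "lie_algebra H = {X. \<forall>t::real. mexp (t *\<^sub>R X) \<in> H}"

definition lie_dim :: "(real^'m^'m) set \<Rightarrow> nat" where
  "lie_dim H = dim (lie_algebra H)"

text \<open>The affine group Aff(n) as matrices [[g, t],[0, 1]] in GL(n+1,R),
  indices 'n option with None the last (homogeneous) coordinate.\<close>
definition Aff :: "(real^('n::finite option)^('n option)) set" where
  "Aff = {M. invertible M \<and> (\<forall>j. M $ None $ Some j = 0) \<and> M $ None $ None = 1}"

definition hom_embed :: "real^'n \<Rightarrow> real^('n::finite option)" where
  "hom_embed x = (\<chi> k. case k of None \<Rightarrow> 1 | Some i \<Rightarrow> x $ i)"

definition aff_act :: "real^('n::finite option)^('n option) \<Rightarrow> real^'n \<Rightarrow> real^'n" where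
  "aff_act M x = (\<chi> i. (M *v hom_embed x) $ Some i)"

definition transitive_on_Rn :: "(real^('n::finite option)^('n option)) set \<Rightarrow> bool" where
  "transitive_on_Rn G \<longleftrightarrow> (\<forall>x y::real^'n. \<exists>g\<in>G. aff_act g x = y)"

definition aff_centraliser :: "(real^('n::finite option)^('n option)) set \<Rightarrow> (real^('n option)^('n option)) set" where
  "aff_centraliser G = {h \<in> Aff. \<forall>g\<in>G. h ** g = g ** h}"

end

theory Submission
  imports Defs
begin

lemma matpow_0[simp]: "matpow A 0 = mat 1" by (simp add: matpow_def)
lemma matpow_Suc: "matpow A (Suc k) = A ** matpow A k" by (simp add: matpow_def)

lemma matpow_comm_gen:
  fixes A B :: "real^'m^'m"
  assumes "A ** B = B ** A" shows "matpow A k ** B = B ** matpow A k"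
proof (induction k)
  case 0 then show ?case by simp
next
  case (Suc k)
  have "matpow A (Suc k) ** B = A ** (matpow A k ** B)" by (simp add: matpow_Suc matrix_mul_assoc)
  also have "\<dots> = (A ** B) ** matpow A k" using Suc by (simp add: matrix_mul_assoc)
  also have "\<dots> = B ** matpow A (Suc k)" using assms by (simp add: matpow_Suc matrix_mul_assoc)
  finally show ?case .
qed

lemma matpow_commute: fixes A :: "real^'m^'m" shows "A ** matpow A k = matpow A k ** A"
  using matpow_comm_gen[of A A k] by simp

lemma matrix_diff_rdistrib: fixes A B C :: "real^'m^'m" shows "(A - B) ** C = A ** C - B ** C"
  by (vector matrix_matrix_mult_def sum_subtractf left_diff_distrib)
lemma matrix_diff_ldistrib: fixes A B C :: "real^'m^'m" shows "C ** (A - B) = C ** A - C ** B"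
  by (vector matrix_matrix_mult_def sum_subtractf right_diff_distrib)
lemma matrix_add_rdistrib': fixes A B C :: "real^'m^'m" shows "(A + B) ** C = A ** C + B ** C"
  by (vector matrix_matrix_mult_def sum.distrib distrib_right)

lemma aff_row: "h \<in> Aff \<Longrightarrow> h $ None $ j = mat 1 $ None $ j"
  by (cases j) (auto simp: Aff_def mat_def)

lemma hom_aff:
  assumes "g \<in> Aff" shows "g *v hom_embed x = hom_embed (aff_act g x)"
proof -
  have r: "g $ None $ j = (if j = None then 1 else 0)" for j
    using aff_row[OF assms, of j] by (simp add: mat_def eq_commute)
  have "(g *v hom_embed x) $ None = (\<Sum>j\<in>UNIV. if j = None then hom_embed x $ j else 0)"
    by (simp add: matrix_vector_mult_def r if_distrib if_distribR cong: if_cong)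
  also have "\<dots> = 1" by (simp add: hom_embed_def)
  finally have "(g *v hom_embed x) $ None = 1" .
  then show ?thesis
    by (auto simp: vec_eq_iff hom_embed_def aff_act_def split: option.splits)
qed

lemma zero_from_one:
  fixes P :: "real^('n::finite option)^('n option)"
  assumes G: "G \<subseteq> Aff" "transitive_on_Rn G" and comm: "\<forall>g\<in>G. P ** g = g ** P"
    and x: "P *v hom_embed x = 0"
  shows "P = 0"
proof -
  have all: "P *v hom_embed y = 0" for y
  proof -
    obtain g where g: "g \<in> G" "aff_act g x = y" using G(2) unfolding transitive_on_Rn_def by blast
    have "hom_embed y = g *v hom_embed x" using hom_aff[of g x] g G(1) by auto
    then have "P *v hom_embed y = (P ** g) *v hom_embed x" by (simp add: matrix_vector_mul_assoc)
    also have "\<dots> = g *v (P *v hom_embed x)" using comm g by (simp add: matrix_vector_mul_assoc)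
    also have "\<dots> = 0" using x by simp
    finally show ?thesis .
  qed
  have col: "P *v axis k 1 = 0" for k
  proof (cases k)
    case None
    have "axis k 1 = hom_embed (0::real^'n)"
      using None by (auto simp: vec_eq_iff hom_embed_def axis_def split: option.splits)
    then show ?thesis using all by simp
  next
    case (Some i)
    have "axis k 1 = hom_embed (axis i 1) - hom_embed (0::real^'n)"
      using Some by (auto simp: vec_eq_iff hom_embed_def axis_def split: option.splits)
    then show ?thesis using all by (simp add: matrix_vector_mult_diff_distrib)
  qed
  show ?thesis
    unfolding vec_eq_iff
  proof (intro allI)
    fix r k
    have "P $ r $ k = (P *v axis k 1) $ r"
      by (simp add: matrix_vector_mult_basis column_def)
    then show "P $ r $ k = 0 $ r $ k" using col by simp
  qed
qed


lemma nilpotent_comm: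
  fixes h :: "real^('n::finite option)^('n option)"
  assumes G: "G \<subseteq> Aff" "transitive_on_Rn G"
    and comm: "\<forall>g\<in>G. h ** g = g ** h" and row: "\<forall>j. h $ None $ j = mat 1 $ None $ j"
  shows "\<exists>N. matpow (h - mat 1) N = 0"
proof -
  define M where "M = h - mat 1"
  have Mrow: "M $ None $ j = 0" for j using row by (simp add: M_def)
  have Mcomm: "M ** g = g ** M" if "g \<in> G" for g
    using comm that by (simp add: M_def matrix_diff_rdistrib matrix_diff_ldistrib)
  have Pcomm: "\<forall>g\<in>G. matpow M k ** g = g ** matpow M k" for k
    using matpow_comm_gen Mcomm by blast
  define R where "R k = range (\<lambda>v. matpow M k *v v)" for k
  have sub: "subspace (R k)" for k
    unfolding R_def by (rule linear_subspace_image[OF matrix_vector_mul_linear subspace_UNIV])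
  have PS: "matpow M (Suc k) = matpow M k ** M" for k
    by (simp add: matpow_Suc matpow_commute)
  have dec: "R (Suc k) \<subseteq> R k" for k
    by (auto simp: R_def PS matrix_vector_mul_assoc[symmetric])
  have "\<exists>k. R (Suc k) = R k"
  proof (rule ccontr)
    assume na: "\<not> ?thesis"
    have lt: "dim (R (Suc k)) < dim (R k)" for k
    proof -
      have "dim (R (Suc k)) \<le> dim (R k)" using dim_subset[OF dec] .
      moreover have "\<not> dim (R k) \<le> dim (R (Suc k))"
        using subspace_dim_equal[OF sub sub dec] na by blast
      ultimately show ?thesis by linarith
    qed
    have "dim (R k) + k \<le> dim (R 0)" for k
    proof (induction k)
      case 0 then show ?case by simp
    next
      case (Suc k) then show ?case using lt[of k] by linarith
    qed
    from this[of "Suc (dim (R 0))"] show False by simp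
  qed
  then obtain k where k: "R (Suc k) = R k" ..
  have "matpow M k *v axis None 1 \<in> R (Suc k)" using k by (auto simp: R_def)
  then obtain v where v: "matpow M k *v axis None 1 = matpow M (Suc k) *v v" by (auto simp: R_def)
  define w where "w = axis None 1 - M *v v"
  have "(M *v v) $ None = 0" by (simp add: matrix_vector_mult_def Mrow)
  then have wN: "w $ None = 1" by (simp add: w_def axis_def)
  have w: "w = hom_embed (\<chi> i. w $ Some i)"
    using wN by (auto simp: vec_eq_iff hom_embed_def split: option.splits)
  have "matpow M k *v w = 0"
    by (simp add: w_def matrix_vector_mult_diff_distrib v PS matrix_vector_mul_assoc)
  then have "matpow M k = 0"
    using zero_from_one[OF G Pcomm] w by metis
  then show ?thesis unfolding M_def by blast
qed

lemma nilp_invertible: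
  fixes h :: "real^'m^'m"
  assumes N: "matpow (h - mat 1) N = 0" shows "invertible h"
proof -
  define M where "M = h - mat 1"
  have "inj ((*v) h)"
  proof (rule injI)
    fix x y assume xy: "h *v x = h *v y"
    define v where "v = x - y"
    have hv: "h *v v = 0" using xy by (simp add: v_def matrix_vector_mult_diff_distrib)
    have Mv: "M *v v = - v" using hv by (simp add: M_def matrix_vector_mult_diff_rdistrib)
    have pw: "matpow M k *v v = (-1)^k *\<^sub>R v" for k
    proof (induction k)
      case 0 then show ?case by simp
    next
      case (Suc k)
      have "matpow M (Suc k) *v v = M *v (matpow M k *v v)"
        by (simp add: matpow_Suc matrix_vector_mul_assoc)
      also have "\<dots> = (-1)^k *\<^sub>R (M *v v)" using Suc by (simp add: matrix_vector_mult_scaleR)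
      finally show ?case using Mv by simp
    qed
    have "(-1::real)^N *\<^sub>R v = 0" using pw[of N] N by (simp add: M_def)
    then have "v = 0" by simp
    then show "x = y" by (simp add: v_def)
  qed
  then obtain B where B: "B ** h = mat 1" using matrix_left_invertible_injective by blast
  then have "h ** B = mat 1" using matrix_left_right_inverse by blast
  with B show ?thesis unfolding invertible_def by blast
qed


lemma centraliser_eq:
  assumes G: "G \<subseteq> Aff" "transitive_on_Rn G"
  shows "aff_centraliser G = {h. (\<forall>g\<in>G. h ** g = g ** h) \<and> (\<forall>j. h $ None $ j = mat 1 $ None $ j)}"
proof (intro set_eqI iffI)
  fix h assume "h \<in> aff_centraliser G"
  then show "h \<in> {h. (\<forall>g\<in>G. h ** g = g ** h) \<and> (\<forall>j. h $ None $ j = mat 1 $ None $ j)}"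
    by (auto simp: aff_centraliser_def aff_row)
next
  fix h assume h: "h \<in> {h. (\<forall>g\<in>G. h ** g = g ** h) \<and> (\<forall>j. h $ None $ j = mat 1 $ None $ j)}"
  then have "invertible h" using nilpotent_comm[OF G, of h] nilp_invertible by blast
  with h show "h \<in> aff_centraliser G"
    by (auto simp: aff_centraliser_def Aff_def mat_def)
qed

lemma matrix_inv_props:
  fixes h :: "real^'m^'m"
  assumes "invertible h" shows "h ** matrix_inv h = mat 1 \<and> matrix_inv h ** h = mat 1"
  unfolding matrix_inv_def by (rule someI_ex) (use assms in \<open>simp add: invertible_def\<close>)

lemma row_mult:
  fixes A B :: "real^('n::finite option)^('n option)"
  assumes "\<forall>j. A $ None $ j = mat 1 $ None $ j"
  shows "(A ** B) $ None $ j = B $ None $ j"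
proof -
  have r: "A $ None $ l = (if l = None then 1 else 0)" for l
    using assms by (simp add: mat_def eq_commute)
  show ?thesis
    by (simp add: matrix_matrix_mult_def r if_distrib if_distribR cong: if_cong)
qed

lemma centraliser_subgroup:
  assumes G: "G \<subseteq> Aff" "transitive_on_Rn G"
  shows "matrix_subgroup (aff_centraliser G)"
proof -
  let ?S = "{h. (\<forall>g\<in>G. h ** g = g ** h) \<and> (\<forall>j. h $ None $ j = mat 1 $ None $ j)}"
  have inv: "\<forall>A\<in>aff_centraliser G. invertible A" by (auto simp: aff_centraliser_def Aff_def)
  have one: "mat 1 \<in> ?S" by simp
  have mul: "A ** B \<in> ?S" if A: "A \<in> ?S" and B: "B \<in> ?S" for A B
  proof -
    have "(A ** B) ** g = g ** (A ** B)" if g: "g \<in> G" for g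
    proof -
      have "(A ** B) ** g = A ** (B ** g)" by (simp add: matrix_mul_assoc)
      also have "\<dots> = (A ** g) ** B" using B g by (simp add: matrix_mul_assoc)
      also have "\<dots> = g ** (A ** B)" using A g by (simp add: matrix_mul_assoc)
      finally show ?thesis .
    qed
    moreover have "(A ** B) $ None $ j = mat 1 $ None $ j" for j
      using row_mult[of A B j] A B by simp
    ultimately show ?thesis by simp
  qed
  have invS: "matrix_inv A \<in> ?S" if A: "A \<in> aff_centraliser G" for A
  proof -
    have AS: "A \<in> ?S" using A centraliser_eq[OF G] by simp
    have ia: "A ** matrix_inv A = mat 1" "matrix_inv A ** A = mat 1"
      using matrix_inv_props inv A by blast+
    have "matrix_inv A ** g = g ** matrix_inv A" if g: "g \<in> G" for g
    proof -
      have "matrix_inv A ** g = matrix_inv A ** g ** (A ** matrix_inv A)" using ia by simp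
      also have "\<dots> = matrix_inv A ** (g ** A) ** matrix_inv A" by (simp add: matrix_mul_assoc)
      also have "\<dots> = matrix_inv A ** (A ** g) ** matrix_inv A" using AS g by simp
      also have "\<dots> = (matrix_inv A ** A) ** g ** matrix_inv A" by (simp add: matrix_mul_assoc)
      also have "\<dots> = g ** matrix_inv A" using ia by simp
      finally show ?thesis .
    qed
    moreover have "matrix_inv A $ None $ j = mat 1 $ None $ j" for j
      using row_mult[of A "matrix_inv A" j] AS ia by simp
    ultimately show ?thesis by simp
  qed
  show ?thesis unfolding matrix_subgroup_def
    using inv one mul invS centraliser_eq[OF G] by auto
qed

lemma centraliser_convex:
  assumes G: "G \<subseteq> Aff" "transitive_on_Rn G"
  shows "convex (aff_centraliser G)"
  unfolding centraliser_eq[OF G]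
proof (rule convexI)
  fix x y and u v :: real
  assume x: "x \<in> {h. (\<forall>g\<in>G. h ** g = g ** h) \<and> (\<forall>j. h $ None $ j = mat 1 $ None $ j)}"
    and y: "y \<in> {h. (\<forall>g\<in>G. h ** g = g ** h) \<and> (\<forall>j. h $ None $ j = mat 1 $ None $ j)}"
    and "0 \<le> u" "0 \<le> v" and uv: "u + v = 1"
  have "(u *\<^sub>R x + v *\<^sub>R y) ** g = g ** (u *\<^sub>R x + v *\<^sub>R y)" if g: "g \<in> G" for g
    using x y g by (simp add: matrix_add_rdistrib' matrix_add_ldistrib scalar_matrix_assoc[symmetric] matrix_scalar_ac)
  moreover have "(u *\<^sub>R x + v *\<^sub>R y) $ None $ j = mat 1 $ None $ j" for j
    using x y uv by (simp add: mat_def)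
  ultimately show "u *\<^sub>R x + v *\<^sub>R y \<in> {h. (\<forall>g\<in>G. h ** g = g ** h) \<and> (\<forall>j. h $ None $ j = mat 1 $ None $ j)}"
    by simp
qed


lemma matpow_scale: fixes A :: "real^'m^'m" shows "matpow (t *\<^sub>R A) k = (t^k) *\<^sub>R matpow A k"
  by (induction k) (simp_all add: matpow_Suc matrix_scalar_ac scalar_matrix_assoc[symmetric])

lemma matpow_1: fixes A :: "real^'m^'m" shows "matpow A 1 = A"
  by (simp add: matpow_Suc)

lemma matpow_bound:
  fixes X :: "real^'m^'m"
  shows "\<bar>matpow X k $ i $ j\<bar> \<le> (\<Sum>i\<in>UNIV. \<Sum>j\<in>UNIV. \<bar>X$i$j\<bar>)^k"
proof (induction k arbitrary: i j)
  case 0 then show ?case by (simp add: mat_def)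
next
  case (Suc k)
  define c where "c = (\<Sum>i\<in>UNIV. \<Sum>j\<in>UNIV. \<bar>X$i$j\<bar>)"
  have row: "(\<Sum>l\<in>UNIV. \<bar>X$i$l\<bar>) \<le> c"
    unfolding c_def by (rule member_le_sum) (auto intro: sum_nonneg)
  have "\<bar>matpow X (Suc k) $ i $ j\<bar> = \<bar>\<Sum>l\<in>UNIV. X$i$l * matpow X k $ l $ j\<bar>"
    by (simp add: matpow_Suc matrix_matrix_mult_def)
  also have "\<dots> \<le> (\<Sum>l\<in>UNIV. \<bar>X$i$l\<bar> * \<bar>matpow X k $ l $ j\<bar>)"
    by (rule order_trans[OF sum_abs]) (simp add: abs_mult)
  also have "\<dots> \<le> (\<Sum>l\<in>UNIV. \<bar>X$i$l\<bar> * c^k)"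
    by (rule sum_mono, rule mult_left_mono) (use Suc in \<open>auto simp: c_def\<close>)
  also have "\<dots> = (\<Sum>l\<in>UNIV. \<bar>X$i$l\<bar>) * c^k" by (simp add: sum_distrib_right)
  also have "\<dots> \<le> c * c^k"
    by (rule mult_right_mono[OF row]) (simp add: c_def sum_nonneg)
  finally show ?case by (simp add: c_def)
qed

lemma norm_mat_le:
  fixes M :: "real^'m^'k"
  shows "norm M \<le> (\<Sum>i\<in>UNIV. \<Sum>j\<in>UNIV. \<bar>M$i$j\<bar>)"
proof -
  have "norm M \<le> (\<Sum>i\<in>UNIV. norm (M$i))" unfolding norm_vec_def[of M] by (rule L2_set_le_sum) simp
  also have "\<dots> \<le> (\<Sum>i\<in>UNIV. \<Sum>j\<in>UNIV. \<bar>M$i$j\<bar>)" by (rule sum_mono) (rule norm_le_l1_cart)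
  finally show ?thesis .
qed

lemma mexp_deriv:
  fixes X :: "real^'m^'m"
  shows "((\<lambda>t. (1/t) *\<^sub>R (mexp (t *\<^sub>R X) - mat 1)) \<longlongrightarrow> X) (at 0)"
proof -
  define c where "c = (\<Sum>i\<in>UNIV. \<Sum>j\<in>UNIV. \<bar>X$i$j\<bar>)"
  have c0: "c \<ge> 0" by (simp add: c_def sum_nonneg)
  have bd: "\<bar>matpow X k $ i $ j\<bar> \<le> c^k" for k i j
    unfolding c_def by (rule matpow_bound)
  define F where "F t k = (1/fact k) *\<^sub>R matpow (t *\<^sub>R X) k" for t k
  have sumF: "summable (F t)" for t
  proof (rule summable_comparison_test')
    show "summable (\<lambda>k. real (CARD('m)) * (real (CARD('m)) * (inverse (fact k) * (\<bar>t\<bar> * c)^k)))"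
      by (intro summable_mult summable_exp)
    fix k :: nat
    have e: "\<bar>F t k $ i $ j\<bar> \<le> inverse (fact k) * (\<bar>t\<bar> * c)^k" for i j
    proof -
      have "\<bar>F t k $ i $ j\<bar> = inverse (fact k) * (\<bar>t\<bar>^k * \<bar>matpow X k $ i $ j\<bar>)"
        by (simp add: F_def matpow_scale abs_mult power_abs divide_inverse)
      also have "\<dots> \<le> inverse (fact k) * (\<bar>t\<bar>^k * c^k)"
        by (intro mult_left_mono bd) auto
      finally show ?thesis by (simp add: power_mult_distrib)
    qed
    have "norm (F t k) \<le> (\<Sum>i\<in>UNIV. \<Sum>j\<in>UNIV. \<bar>F t k $ i $ j\<bar>)" by (rule norm_mat_le)
    also have "\<dots> \<le> (\<Sum>i\<in>(UNIV::'m set). \<Sum>j\<in>(UNIV::'m set). inverse (fact k) * (\<bar>t\<bar> * c)^k)"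
      by (intro sum_mono e)
    also have "\<dots> = real (CARD('m)) * (real (CARD('m)) * (inverse (fact k) * (\<bar>t\<bar> * c)^k))"
      by simp
    finally show "norm (F t k) \<le> real (CARD('m)) * (real (CARD('m)) * (inverse (fact k) * (\<bar>t\<bar> * c)^k))" .
  qed
  show ?thesis
  proof (rule vec_tendstoI, rule vec_tendstoI)
    fix i j
    define a where "a k = matpow X k $ i $ j / fact k" for k
    have bl: "bounded_linear (\<lambda>A::real^'m^'m. A $ i $ j)"
      using bounded_linear_compose[OF bounded_linear_vec_nth bounded_linear_vec_nth] by blast
    have comp: "mexp (t *\<^sub>R X) $ i $ j = (\<Sum>k. a k * t^k)" for t
    proof -
      have "mexp (t *\<^sub>R X) $ i $ j = (\<Sum>k. F t k $ i $ j)"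
        unfolding mexp_def F_def[symmetric] using bounded_linear.suminf[OF bl sumF[of t]] by simp
      also have "\<dots> = (\<Sum>k. a k * t^k)"
        by (rule suminf_cong) (simp add: F_def a_def matpow_scale mult.commute)
      finally show ?thesis .
    qed
    have sa: "summable (\<lambda>k. a k * 1^k)"
    proof (rule summable_comparison_test')
      show "summable (\<lambda>k. inverse (fact k) * c^k)" by (rule summable_exp)
      fix k :: nat
      show "norm (a k * 1^k) \<le> inverse (fact k) * c^k"
        using bd[of k i j] by (simp add: a_def abs_mult divide_inverse mult.commute mult_left_mono)
    qed
    have D: "DERIV (\<lambda>t. \<Sum>k. a k * t^k) 0 :> (\<Sum>k. diffs a k * 0^k)"
      by (rule termdiffs_strong[OF sa]) simp
    have D1: "(\<Sum>k. diffs a k * 0^k) = X $ i $ j"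
      by (subst powser_zero) (simp add: diffs_def a_def matpow_Suc)
    have D0: "(\<Sum>k. a k * 0^k) = mat 1 $ i $ j"
      by (subst powser_zero) (simp add: a_def)
    have "((\<lambda>h. ((\<Sum>k. a k * (0 + h)^k) - (\<Sum>k. a k * 0^k)) / h) \<longlongrightarrow> X $ i $ j) (at 0)"
      using D D1 by (simp add: DERIV_def)
    then show "((\<lambda>t. ((1/t) *\<^sub>R (mexp (t *\<^sub>R X) - mat 1)) $ i $ j) \<longlongrightarrow> X $ i $ j) (at 0)"
      using D0 by (simp add: comp divide_inverse mult.commute)
  qed
qed


lemma L_subspace:
  "subspace {X::real^('n::finite option)^('n option). (\<forall>g\<in>G. X ** g = g ** X) \<and> (\<forall>j. X $ None $ j = 0)}"
  unfolding subspace_def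
  by (simp add: matrix_add_rdistrib' matrix_add_ldistrib scalar_matrix_assoc[symmetric] matrix_scalar_ac)

lemma scale_mat_vec: fixes X :: "real^'m^'k" shows "(c *\<^sub>R X) *v v = c *\<^sub>R (X *v v)"
  by (simp add: vec_eq_iff matrix_vector_mult_def sum_distrib_left mult.assoc)

lemma L_dim:
  fixes G :: "(real^('n::finite option)^('n option)) set"
  assumes G: "G \<subseteq> Aff" "transitive_on_Rn G"
  shows "dim {X. (\<forall>g\<in>G. X ** g = g ** X) \<and> (\<forall>j. X $ None $ j = 0)} \<le> CARD('n)"
proof -
  define L where "L = {X::real^('n option)^('n option). (\<forall>g\<in>G. X ** g = g ** X) \<and> (\<forall>j. X $ None $ j = 0)}"
  have subL: "subspace L" unfolding L_def by (rule L_subspace)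
  define T where "T X = X *v axis None 1" for X :: "real^('n option)^('n option)"
  have linT: "linear T"
    by (rule linearI) (simp_all add: T_def matrix_vector_mult_add_rdistrib scale_mat_vec)
  have he: "hom_embed (0::real^'n) = axis None 1"
    by (auto simp: vec_eq_iff hom_embed_def axis_def split: option.splits)
  have injT: "inj_on T (span L)"
  proof -
    have "inj_on T L"
    proof (rule inj_onI)
      fix X Y assume X: "X \<in> L" and Y: "Y \<in> L" and e: "T X = T Y"
      have "X - Y \<in> L" using subspace_diff[OF subL X Y] .
      moreover have "(X - Y) *v hom_embed 0 = 0"
        using e by (simp add: T_def he matrix_vector_mult_diff_rdistrib)
      ultimately have "X - Y = 0" using zero_from_one[OF G] unfolding L_def by blast
      then show "X = Y" by simp
    qed
    then show ?thesis using subL by (metis span_eq_iff)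
  qed
  have "dim (T ` L) = dim L" by (rule dim_image_eq[OF linT injT])
  moreover have "dim (T ` L) \<le> CARD('n)"
  proof -
    have rowL: "(T X) $ None = 0" if "X \<in> L" for X
      using that by (simp add: T_def L_def matrix_vector_mult_def)
    have sp: "T ` L \<subseteq> span (range (\<lambda>i. axis (Some i) (1::real)))"
    proof
      fix v assume "v \<in> T ` L"
      then have vN: "v $ None = 0" using rowL by auto
      have "v = (\<Sum>i\<in>UNIV. (v $ Some i) *\<^sub>R axis (Some i) 1)"
      proof (subst vec_eq_iff, intro allI)
        fix k show "v $ k = (\<Sum>i\<in>UNIV. (v $ Some i) *\<^sub>R axis (Some i) (1::real)) $ k"
          using vN by (cases k) (simp_all add: axis_def if_distrib if_distribR cong: if_cong)
      qed
      also have "\<dots> \<in> span (range (\<lambda>i. axis (Some i) (1::real)))"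
        by (intro span_sum span_scale span_base) auto
      finally show "v \<in> span (range (\<lambda>i. axis (Some i) (1::real)))" .
    qed
    have "dim (T ` L) \<le> card (range (\<lambda>i::'n. axis (Some i) (1::real)))"
      by (rule dim_le_card[OF sp]) simp
    also have "\<dots> \<le> CARD('n)" by (rule card_image_le) simp
    finally show ?thesis .
  qed
  ultimately show ?thesis unfolding L_def by simp
qed

lemma lie_sub:
  fixes G :: "(real^('n::finite option)^('n option)) set"
  assumes G: "G \<subseteq> Aff" "transitive_on_Rn G"
  shows "lie_algebra (aff_centraliser G) \<subseteq> {X. (\<forall>g\<in>G. X ** g = g ** X) \<and> (\<forall>j. X $ None $ j = 0)}"
proof
  fix X assume X: "X \<in> lie_algebra (aff_centraliser G)"
  define L where "L = {X::real^('n option)^('n option). (\<forall>g\<in>G. X ** g = g ** X) \<and> (\<forall>j. X $ None $ j = 0)}"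
  have subL: "subspace L" unfolding L_def by (rule L_subspace)
  have inL: "mexp (t *\<^sub>R X) - mat 1 \<in> L" for t
  proof -
    have "mexp (t *\<^sub>R X) \<in> aff_centraliser G" using X by (simp add: lie_algebra_def)
    then show ?thesis unfolding centraliser_eq[OF G] L_def
      by (simp add: matrix_diff_rdistrib matrix_diff_ldistrib)
  qed
  have ev: "eventually (\<lambda>t. (1/t) *\<^sub>R (mexp (t *\<^sub>R X) - mat 1) \<in> L) (at (0::real))"
    using subspace_scale[OF subL inL] by simp
  have "X \<in> L"
    by (rule Lim_in_closed_set[OF closed_subspace[OF subL] ev _ mexp_deriv]) simp
  then show "X \<in> {X. (\<forall>g\<in>G. X ** g = g ** X) \<and> (\<forall>j. X $ None $ j = 0)}" by (simp add: L_def)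
qed

theorem mainTheorem19:
  fixes G :: "(real^('n::finite option)^('n option)) set"
  assumes "matrix_subgroup G" and "G \<subseteq> Aff"
    and "transitive_on_Rn G"
  shows "matrix_subgroup (aff_centraliser G) \<and> connected (aff_centraliser G)
    \<and> unipotent_group (aff_centraliser G) \<and> lie_dim (aff_centraliser G) \<le> CARD('n)"
proof (intro conjI)
  have G: "G \<subseteq> Aff" "transitive_on_Rn G" using assms by auto
  show "matrix_subgroup (aff_centraliser G)" by (rule centraliser_subgroup[OF G])
  show "connected (aff_centraliser G)" by (rule convex_connected[OF centraliser_convex[OF G]])
  show "unipotent_group (aff_centraliser G)"
    unfolding unipotent_group_def unipotent_mat_def
    using nilpotent_comm[OF G] centraliser_eq[OF G] by auto
  have "lie_dim (aff_centraliser G) \<le> dim {X. (\<forall>g\<in>G. X ** g = g ** X) \<and> (\<forall>j. X $ None $ j = 0)}"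
    unfolding lie_dim_def by (rule dim_subset[OF lie_sub[OF G]])
  also have "\<dots> \<le> CARD('n)" by (rule L_dim[OF G])
  finally show "lie_dim (aff_centraliser G) \<le> CARD('n)" .
qed

end
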